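(* Every pairwise social choice correspondence that is strategyproof and strongly Condorcet-consistent satisfies Condorcet-stability (COS).
   Context: Let $A$ be a finite set of alternatives; a preference profile $R$ assigns a strict total order $\succ_i$ on $A$ to each voter $i$ of a finite non-empty electorate $N\subseteq\{1,2,\dots\}$; $\mathcal{R}^*(A)$ is the set of all profiles over all electorates. $g_R(x,y)=|\{i: x\succ_i y\}|-|\{i: y\succ_i x\}|$; $x\succsim_R y$ iff $g_R(x,y)\ge0$, with strict part $\succ_R$. A Condorcet winner is $x$ with $x\succ_R y$ for all $y\ne x$. An SCC is $f:\mathcal{R}^*(A)\to 2^A\setminus\{\emptyset\}$; it is pairwise if $f(R)=f(R')$ whenever $g_R=g_{R'}$. Fishburn's extension: for $X\ne Y$, $X\succ_i^F Y$ iff $x\succ_i y$ for all $x\in X\setminus Y,y\in Y$ and for all $x\in X,y\in Y\setminus X$. $f$ is strategyproof if no voter $i$ can change only his own preference to move from $R$ to $R'$ with $f(R')\succ_i^F f(R)$. $f$ is strongly Condorcet-consistent if $f(R)=\{x\}$ holds iff $x$ is the Condorcet winner in $R$. $f$ satisfies COS if for every profile $R$ there is no $x\in A$ with $f(R)\setminus\{x\}\ne\emptyset$ and $x\succ_R y$ for all $y\in f(R)\setminus\{x\}$. *)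

theory Defs
  imports Main
begin

text \<open>A profile is a pair (N, R) of an electorate
N (finite, nonempty, subset of the positive naturals) and an assignment R of a
strict total order (as a relation; (x,y) in R i means x is strictly preferred to y
by voter i) on A to each voter in N; voters outside N have the empty relation,
so that each profile has a canonical representation.\<close>

definition strict_total_order_on :: "'a set \<Rightarrow> 'a rel \<Rightarrow> bool" where
  "strict_total_order_on A r \<longleftrightarrow>
     r \<subseteq> A \<times> A \<and> irrefl r \<and> trans r \<and>
     (\<forall>x\<in>A. \<forall>y\<in>A. x \<noteq> y \<longrightarrow> (x, y) \<in> r \<or> (y, x) \<in> r)"

definition is_profile :: "'a set \<Rightarrow> nat set \<Rightarrow> (nat \<Rightarrow> 'a rel) \<Rightarrow> bool" where
  "is_profile A N R \<longleftrightarrow>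
     finite N \<and> N \<noteq> {} \<and> 0 \<notin> N \<and>
     (\<forall>i\<in>N. strict_total_order_on A (R i)) \<and> (\<forall>i. i \<notin> N \<longrightarrow> R i = {})"

definition margin :: "nat set \<Rightarrow> (nat \<Rightarrow> 'a rel) \<Rightarrow> 'a \<Rightarrow> 'a \<Rightarrow> int" where
  "margin N R x y = int (card {i\<in>N. (x, y) \<in> R i}) - int (card {i\<in>N. (y, x) \<in> R i})"

definition condorcet_winner :: "'a set \<Rightarrow> nat set \<Rightarrow> (nat \<Rightarrow> 'a rel) \<Rightarrow> 'a \<Rightarrow> bool" where
  "condorcet_winner A N R x \<longleftrightarrow> x \<in> A \<and> (\<forall>y\<in>A. y \<noteq> x \<longrightarrow> margin N R x y > 0)"

definition scc :: "'a set \<Rightarrow> (nat set \<Rightarrow> (nat \<Rightarrow> 'a rel) \<Rightarrow> 'a set) \<Rightarrow> bool" where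
  "scc A f \<longleftrightarrow> (\<forall>N R. is_profile A N R \<longrightarrow> f N R \<noteq> {} \<and> f N R \<subseteq> A)"

definition pairwise_scc :: "'a set \<Rightarrow> (nat set \<Rightarrow> (nat \<Rightarrow> 'a rel) \<Rightarrow> 'a set) \<Rightarrow> bool" where
  "pairwise_scc A f \<longleftrightarrow>
     (\<forall>N R N' R'. is_profile A N R \<longrightarrow> is_profile A N' R' \<longrightarrow>
        (\<forall>x y. margin N R x y = margin N' R' x y) \<longrightarrow> f N R = f N' R')"

definition fishburn :: "'a rel \<Rightarrow> 'a set \<Rightarrow> 'a set \<Rightarrow> bool" where
  "fishburn r X Y \<longleftrightarrow> X \<noteq> Y \<and>
     (\<forall>x\<in>X - Y. \<forall>y\<in>Y. (x, y) \<in> r) \<and> (\<forall>x\<in>X. \<forall>y\<in>Y - X. (x, y) \<in> r)"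

definition strategyproof :: "'a set \<Rightarrow> (nat set \<Rightarrow> (nat \<Rightarrow> 'a rel) \<Rightarrow> 'a set) \<Rightarrow> bool" where
  "strategyproof A f \<longleftrightarrow>
     (\<forall>N R R' i. is_profile A N R \<longrightarrow> is_profile A N R' \<longrightarrow> i \<in> N \<longrightarrow>
        (\<forall>j. j \<noteq> i \<longrightarrow> R' j = R j) \<longrightarrow> \<not> fishburn (R i) (f N R') (f N R))"

definition strongly_condorcet_consistent :: "'a set \<Rightarrow> (nat set \<Rightarrow> (nat \<Rightarrow> 'a rel) \<Rightarrow> 'a set) \<Rightarrow> bool" where
  "strongly_condorcet_consistent A f \<longleftrightarrow>
     (\<forall>N R. is_profile A N R \<longrightarrow> (\<forall>x. f N R = {x} \<longleftrightarrow> condorcet_winner A N R x))"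

definition COS :: "'a set \<Rightarrow> (nat set \<Rightarrow> (nat \<Rightarrow> 'a rel) \<Rightarrow> 'a set) \<Rightarrow> bool" where
  "COS A f \<longleftrightarrow>
     (\<forall>N R. is_profile A N R \<longrightarrow>
        \<not> (\<exists>x\<in>A. f N R - {x} \<noteq> {} \<and> (\<forall>y\<in>f N R - {x}. margin N R x y > 0)))"

end

theory Submission
  imports Defs
begin


definition lexo :: "'a set \<Rightarrow> ('a \<Rightarrow> nat) \<Rightarrow> ('a \<Rightarrow> nat) \<Rightarrow> 'a rel" where
  "lexo A rk k = {(a,b). a \<in> A \<and> b \<in> A \<and> (k a < k b \<or> (k a = k b \<and> rk a < rk b))}"

lemma lexo_sto: "inj_on rk A \<Longrightarrow> strict_total_order_on A (lexo A rk k)"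
  unfolding strict_total_order_on_def lexo_def irrefl_def trans_def
  by (auto simp: inj_on_def) (metis linorder_neqE_nat)

lemma conv_sto: "strict_total_order_on A r \<Longrightarrow> strict_total_order_on A (r\<inverse>)"
  unfolding strict_total_order_on_def irrefl_def trans_def by blast

definition cc :: "'a rel \<Rightarrow> 'a \<Rightarrow> 'a \<Rightarrow> int" where
  "cc P a b = (if (a,b) \<in> P then 1 else 0) - (if (b,a) \<in> P then 1 else 0)"

lemma cc_conv: "cc (P\<inverse>) a b = - cc P a b" unfolding cc_def by auto

lemma card_insert_filter:
  assumes "finite M" "j \<notin> M"
  shows "card {i \<in> insert j M. Q i} = card {i\<in>M. Q i} + (if Q j then 1 else 0)"
proof (cases "Q j")
  case True
  have "{i \<in> insert j M. Q i} = insert j {i\<in>M. Q i}" using True by auto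
  then show ?thesis using assms True by simp
next
  case False
  have "{i \<in> insert j M. Q i} = {i\<in>M. Q i}" using False by auto
  then show ?thesis using False by simp
qed

lemma margin_add2:
  assumes "finite N" "i1 \<notin> N" "i2 \<notin> N" "i1 \<noteq> i2"
  shows "margin (insert i1 (insert i2 N)) (R(i1:=P1, i2:=P2)) a b
       = margin N R a b + cc P1 a b + cc P2 a b"
proof -
  have e: "\<And>Q. card {i \<in> insert i1 (insert i2 N). Q ((R(i1:=P1, i2:=P2)) i)}
     = card {i\<in>N. Q (R i)} + (if Q P1 then 1 else 0) + (if Q P2 then 1 else 0)"
  proof -
    fix Q
    have "card {i \<in> insert i1 (insert i2 N). Q ((R(i1:=P1, i2:=P2)) i)}
      = card {i \<in> insert i2 N. Q ((R(i1:=P1, i2:=P2)) i)} + (if Q P1 then 1 else 0)"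
      using assms by (subst card_insert_filter) auto
    also have "card {i \<in> insert i2 N. Q ((R(i1:=P1, i2:=P2)) i)}
      = card {i \<in> N. Q ((R(i1:=P1, i2:=P2)) i)} + (if Q P2 then 1 else 0)"
      using assms by (subst card_insert_filter) auto
    also have "{i \<in> N. Q ((R(i1:=P1, i2:=P2)) i)} = {i\<in>N. Q (R i)}"
      using assms by auto
    finally show "card {i \<in> insert i1 (insert i2 N). Q ((R(i1:=P1, i2:=P2)) i)}
     = card {i\<in>N. Q (R i)} + (if Q P1 then 1 else 0) + (if Q P2 then 1 else 0)" by linarith
  qed
  show ?thesis unfolding margin_def cc_def
    using e[of "\<lambda>r. (a,b) \<in> r"] e[of "\<lambda>r. (b,a) \<in> r"] by simp
qed

lemma profile_add2:
  assumes "is_profile A N R" "i1 \<notin> N" "i2 \<notin> N" "i1 \<noteq> i2" "0 < i1" "0 < i2"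
    "strict_total_order_on A P1" "strict_total_order_on A P2"
  shows "is_profile A (insert i1 (insert i2 N)) (R(i1:=P1, i2:=P2))"
  using assms unfolding is_profile_def by auto



definition kS :: "'a set \<Rightarrow> 'a set \<Rightarrow> 'a \<Rightarrow> 'a \<Rightarrow> 'a set \<Rightarrow> 'a \<Rightarrow> nat" where
  "kS X T z x S a = (if a \<in> S then 0 else if a \<in> X then 1 else if a = z then 3 else if a \<in> T then 2 else 4)"

definition kP :: "'a set \<Rightarrow> 'a set \<Rightarrow> 'a \<Rightarrow> 'a \<Rightarrow> 'a set \<Rightarrow> 'a \<Rightarrow> nat" where
  "kP X T z x S a = (if a = z then 0 else Suc (kS X T z x S a))"

definition DD :: "'a set \<Rightarrow> 'a \<Rightarrow> 'a \<Rightarrow> 'a \<Rightarrow> int" where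
  "DD T z a b = (if a \<in> T \<and> b = z then 2 else if a = z \<and> b \<in> T then -2 else 0)"

lemma cdiff:
  assumes "S \<subseteq> X" "X \<subseteq> T" "T \<subseteq> A" "z \<in> A" "z \<notin> T"
  shows "cc (lexo A rk (kS X T z x S)) a b - cc (lexo A rk (kP X T z x S)) a b = DD T z a b"
  using assms unfolding cc_def lexo_def kS_def kP_def DD_def
  by (auto split: if_splits)



lemma step:
  fixes A :: "'a set" and f :: "nat set \<Rightarrow> (nat \<Rightarrow> 'a rel) \<Rightarrow> 'a set"
  assumes fin: "finite A" and sc: "scc A f" and pw: "pairwise_scc A f" and sp: "strategyproof A f"
    and prof: "is_profile A N R" and xA: "x \<in> A" and zA: "z \<in> A"
    and zT: "z \<notin> insert x (f N R)"
  shows "\<exists>N' R'. is_profile A N' R' \<and> f N' R' = f N R \<and>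
           (\<forall>a b. margin N' R' a b = margin N R a b + DD (insert x (f N R)) z a b)"
proof -
  define X where "X = f N R"
  define T where "T = insert x X"
  obtain rk :: "'a \<Rightarrow> nat" and n where rk: "inj_on rk A"
    using finite_imp_inj_to_nat_seg[OF fin] by blast
  have XA: "X \<subseteq> A" using sc prof unfolding scc_def X_def by blast
  have TA: "T \<subseteq> A" using XA xA unfolding T_def by blast
  have XT: "X \<subseteq> T" unfolding T_def by blast
  have zT': "z \<notin> T" using zT unfolding T_def X_def .
  have finN: "finite N" and N0: "0 \<notin> N" using prof unfolding is_profile_def by auto
  define i1 where "i1 = Suc (Max N)"
  define i2 where "i2 = Suc (Suc (Max N))"
  have i1N: "i1 \<notin> N" unfolding i1_def using Max_ge[OF finN, of "Suc (Max N)"] by linarith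
  have i2N: "i2 \<notin> N" unfolding i2_def using Max_ge[OF finN, of "Suc (Suc (Max N))"] by linarith
  have i12: "i1 \<noteq> i2" "0 < i1" "0 < i2" unfolding i1_def i2_def by auto
  define NN where "NN = insert i1 (insert i2 N)"
  define P where "P S = lexo A rk (kP X T z x S)" for S
  define P' where "P' S = lexo A rk (kS X T z x S)" for S
  define Rp where "Rp S = R(i1 := P S, i2 := (P S)\<inverse>)" for S
  define Rd where "Rd S = R(i1 := P' S, i2 := (P S)\<inverse>)" for S
  have stoP: "strict_total_order_on A (P S)" for S unfolding P_def by (rule lexo_sto[OF rk])
  have stoP': "strict_total_order_on A (P' S)" for S unfolding P'_def by (rule lexo_sto[OF rk])
  have profp: "is_profile A NN (Rp S)" for S
    unfolding NN_def Rp_def by (rule profile_add2[OF prof i1N i2N i12 stoP conv_sto[OF stoP]])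
  have profd: "is_profile A NN (Rd S)" for S
    unfolding NN_def Rd_def by (rule profile_add2[OF prof i1N i2N i12 stoP' conv_sto[OF stoP]])
  have mp: "margin NN (Rp S) a b = margin N R a b" for S a b
    unfolding NN_def Rp_def margin_add2[OF finN i1N i2N i12(1)] cc_conv by simp
  have md: "margin NN (Rd S) a b = margin N R a b + DD T z a b" if "S \<subseteq> X" for S a b
  proof -
    have "margin NN (Rd S) a b = margin N R a b + cc (P' S) a b - cc (P S) a b"
      unfolding NN_def Rd_def margin_add2[OF finN i1N i2N i12(1)] cc_conv by simp
    also have "\<dots> = margin N R a b + DD T z a b"
      using cdiff[OF that XT TA zA zT', where rk=rk and a=a and b=b and x=x] unfolding P_def P'_def by linarith
    finally show ?thesis .
  qed
  define Y where "Y = f NN (Rd {})"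
  define S0 where "S0 = X - Y"
  have S0X: "S0 \<subseteq> X" unfolding S0_def by blast
  have fY: "f NN (Rd S0) = Y"
  proof -
    have "\<forall>a b. margin NN (Rd S0) a b = margin NN (Rd {}) a b" using md[OF S0X] md[of "{}"] by simp
    then show ?thesis unfolding Y_def using pw profd unfolding pairwise_scc_def by blast
  qed
  have fX: "f NN (Rp S0) = X"
  proof -
    have "\<forall>a b. margin NN (Rp S0) a b = margin N R a b" using mp by simp
    then show ?thesis unfolding X_def using pw profp prof unfolding pairwise_scc_def by blast
  qed
  have YA: "Y \<subseteq> A" using sc profd unfolding scc_def Y_def by blast
  have nf: "\<not> fishburn (P' S0) X Y"
  proof -
    have "\<not> fishburn (Rd S0 i1) (f NN (Rp S0)) (f NN (Rd S0))"
    proof -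
      have "i1 \<in> NN" unfolding NN_def by simp
      moreover have "\<forall>j. j \<noteq> i1 \<longrightarrow> Rp S0 j = Rd S0 j" unfolding Rp_def Rd_def by simp
      ultimately show ?thesis using sp profd profp unfolding strategyproof_def by blast
    qed
    then show ?thesis using fX fY i12(1) unfolding Rd_def by simp
  qed
  have XY: "X = Y"
  proof (rule ccontr)
    assume "X \<noteq> Y"
    have "fishburn (P' S0) X Y"
      unfolding fishburn_def P'_def lexo_def kS_def S0_def
      using \<open>X \<noteq> Y\<close> XA YA by auto
    then show False using nf by simp
  qed
  show ?thesis
    apply (rule exI[of _ NN], rule exI[of _ "Rd {}"])
    using profd md[of "{}"] XY unfolding Y_def X_def T_def by auto
qed



theorem lemma5:
  fixes A :: "'a set" and f :: "nat set \<Rightarrow> (nat \<Rightarrow> 'a rel) \<Rightarrow> 'a set"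
  assumes "finite A"
    and "scc A f"
    and "pairwise_scc A f"
    and "strategyproof A f"
    and "strongly_condorcet_consistent A f"
  shows "COS A f"
proof -
  note fin = assms(1) and sc = assms(2) and pw = assms(3) and sp = assms(4) and scc' = assms(5)
  have key: "\<And>N R. is_profile A N R \<Longrightarrow> f N R - {x} \<noteq> {} \<Longrightarrow>
      (\<forall>y\<in>f N R - {x}. margin N R x y > 0) \<Longrightarrow> (\<Sum>w\<in>A-{x}. nat (1 - margin N R x w)) = n \<Longrightarrow> False"
    if xA: "x \<in> A" for x n
  proof (induction n rule: less_induct)
    case (less n N R)
    show False
    proof (cases "\<forall>w\<in>A. w \<noteq> x \<longrightarrow> margin N R x w > 0")
      case True
      then have "condorcet_winner A N R x" unfolding condorcet_winner_def using xA by blast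
      then have "f N R = {x}" using scc' less.prems(1) unfolding strongly_condorcet_consistent_def by blast
      then show False using less.prems(2) by simp
    next
      case False
      then obtain z where zA: "z \<in> A" and zx: "z \<noteq> x" and mz: "margin N R x z \<le> 0"
        by (auto simp: not_less)
      have zf: "z \<notin> insert x (f N R)" using less.prems(3) zx mz by force
      obtain N' R' where p': "is_profile A N' R'" and f': "f N' R' = f N R"
        and m': "\<forall>a b. margin N' R' a b = margin N R a b + DD (insert x (f N R)) z a b"
        using step[OF fin sc pw sp less.prems(1) xA zA zf] by blast
      have mx: "margin N' R' x w = margin N R x w + (if w = z then 2 else 0)" for w
        using m' zx unfolding DD_def by auto
      have lt: "(\<Sum>w\<in>A-{x}. nat (1 - margin N' R' x w)) < n"
        unfolding less.prems(4)[symmetric]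
      proof (rule sum_strict_mono_ex1)
        show "finite (A - {x})" using fin by simp
        show "\<forall>w\<in>A - {x}. nat (1 - margin N' R' x w) \<le> nat (1 - margin N R x w)"
          using mx by (auto simp: nat_mono)
        show "\<exists>w\<in>A - {x}. nat (1 - margin N' R' x w) < nat (1 - margin N R x w)"
          using mx zA zx mz by (intro bexI[of _ z]) auto
      qed
      show False
      proof (rule less.IH[OF lt p'])
        show "f N' R' - {x} \<noteq> {}" using f' less.prems(2) by simp
        show "\<forall>y\<in>f N' R' - {x}. 0 < margin N' R' x y" using f' less.prems(3) mx by (simp add: add_pos_nonneg)
      qed simp
    qed
  qed
  show ?thesis unfolding COS_def
    using key by blast
qed

end
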